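(* If a set $W\subseteq V$ with $|W|=3$ can be generated from some connected pair, then there exists $X\supseteq W$ such that $D[X]$ is a directed sub-block, and some $i\in W$ is reachable from all other nodes both in $D[W]$ and in $D[X]$.
   Context: $D=(V,A)$ is a directed graph. $\mathrm{IN}(X)$ is the set of nodes from which some member of $X$ is reachable by a directed path. For disjoint nonempty $X,Y,Z$, $f_E(X,Y,Z)=1$ iff $\mathrm{IN}(X)\cap\mathrm{IN}(Y)=\emptyset$ computed in $D-Z$; node $j$ is dynamically partitioning relative to $k$ and $Y$ iff $f_E(\{k\},Y,\{j\})=1$. A connected pair is a set $\{i,j\}$ joined by an arc in some direction. A set $W_n$ of size $n$ can be generated from $W_m$ of size $m$, $2\le m<n$, iff there are sets $W_m\subset\dots\subset W_n$ with $W_{l+1}=W_l\cup\{k\}$, $k\in V\setminus W_l$, such that there is an arc from $k$ to some $j\in W_l$ that is not dynamically partitioning relative to $k$ and $W_l\setminus\{j\}$. $D[W]$ is the subgraph induced on $W$; reachability in $D[W]$ is via directed paths inside $D[W]$. A graph is biconnected if it has at least three vertices, is connected and remains connected after deleting any one vertex. $D[X]$ is a directed sub-block if some node of $X$ is reachable within $D[X]$ from all other nodes and the underlying undirected graph of $D[X]$ is biconnected. *)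

theory Defs
  imports Main
begin

definition reach_in :: "('a \<times> 'a) set \<Rightarrow> 'a set \<Rightarrow> 'a \<Rightarrow> 'a \<Rightarrow> bool" where
  "reach_in A S u v \<longleftrightarrow> u \<in> S \<and> v \<in> S \<and> (u, v) \<in> (A \<inter> (S \<times> S))\<^sup>*"

definition IN_set :: "('a \<times> 'a) set \<Rightarrow> 'a set \<Rightarrow> 'a set \<Rightarrow> 'a set" where
  "IN_set A S X = {u \<in> S. \<exists>x\<in>X. reach_in A S u x}"

definition f_E :: "'a set \<Rightarrow> ('a \<times> 'a) set \<Rightarrow> 'a set \<Rightarrow> 'a set \<Rightarrow> 'a set \<Rightarrow> bool" where
  "f_E V A X Y Z \<longleftrightarrow> IN_set A (V - Z) X \<inter> IN_set A (V - Z) Y = {}"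

definition dyn_partitioning :: "'a set \<Rightarrow> ('a \<times> 'a) set \<Rightarrow> 'a \<Rightarrow> 'a \<Rightarrow> 'a set \<Rightarrow> bool" where
  "dyn_partitioning V A j k Y \<longleftrightarrow> f_E V A {k} Y {j}"

definition connected_pair :: "'a set \<Rightarrow> ('a \<times> 'a) set \<Rightarrow> 'a set \<Rightarrow> bool" where
  "connected_pair V A P \<longleftrightarrow> (\<exists>i j. i \<in> V \<and> j \<in> V \<and> i \<noteq> j \<and> P = {i, j} \<and> ((i, j) \<in> A \<or> (j, i) \<in> A))"

definition gen_step :: "'a set \<Rightarrow> ('a \<times> 'a) set \<Rightarrow> 'a set \<Rightarrow> 'a set \<Rightarrow> bool" where
  "gen_step V A Wl Wl' \<longleftrightarrow> (\<exists>k \<in> V - Wl. Wl' = insert k Wl \<and>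
      (\<exists>j \<in> Wl. (k, j) \<in> A \<and> \<not> dyn_partitioning V A j k (Wl - {j})))"

definition generated_from :: "'a set \<Rightarrow> ('a \<times> 'a) set \<Rightarrow> 'a set \<Rightarrow> 'a set \<Rightarrow> bool" where
  "generated_from V A W W' \<longleftrightarrow> finite W \<and> finite W' \<and> 2 \<le> card W \<and> card W < card W'
     \<and> (gen_step V A)\<^sup>*\<^sup>* W W'"

definition und_adj :: "('a \<times> 'a) set \<Rightarrow> 'a set \<Rightarrow> ('a \<times> 'a) set" where
  "und_adj A S = {(u, v). u \<in> S \<and> v \<in> S \<and> u \<noteq> v \<and> ((u, v) \<in> A \<or> (v, u) \<in> A)}"

definition und_connected :: "('a \<times> 'a) set \<Rightarrow> 'a set \<Rightarrow> bool" where
  "und_connected A S \<longleftrightarrow> (\<forall>u\<in>S. \<forall>v\<in>S. (u, v) \<in> (und_adj A S)\<^sup>*)"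

definition biconnected :: "('a \<times> 'a) set \<Rightarrow> 'a set \<Rightarrow> bool" where
  "biconnected A S \<longleftrightarrow> finite S \<and> 3 \<le> card S \<and> und_connected A S \<and>
     (\<forall>v\<in>S. und_connected A (S - {v}))"

definition directed_sub_block :: "('a \<times> 'a) set \<Rightarrow> 'a set \<Rightarrow> bool" where
  "directed_sub_block A X \<longleftrightarrow> (\<exists>r\<in>X. \<forall>v\<in>X. reach_in A X v r) \<and> biconnected A X"

end

theory Submission
  imports Defs "HOL-Library.Transitive_Closure_Table"
begin


lemma rp_succ: "rtrancl_path r x xs y \<Longrightarrow> successively r (x#xs) \<and> last (x#xs) = y"
  by (induction rule: rtrancl_path.induct) auto

lemma dpath:
  assumes "(u,v) \<in> R\<^sup>*"
  shows "\<exists>p. p \<noteq> [] \<and> hd p = u \<and> last p = v \<and> successively (\<lambda>x y. (x,y)\<in>R) p \<and> distinct p"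
proof -
  have "(\<lambda>x y. (x,y)\<in>R)\<^sup>*\<^sup>* u v" using assms by (simp add: rtrancl_def)
  then obtain xs where "rtrancl_path (\<lambda>x y. (x,y)\<in>R) u xs v" by (auto simp: rtranclp_eq_rtrancl_path)
  then obtain xs' where "rtrancl_path (\<lambda>x y. (x,y)\<in>R) u xs' v" "distinct (u#xs')"
    by (rule rtrancl_path_distinct)
  thus ?thesis using rp_succ[of _ u xs' v] by (intro exI[of _ "u#xs'"]) auto
qed

lemma succ_set: "successively (\<lambda>x y. (x,y)\<in> A \<inter> S\<times>S) p \<Longrightarrow> p \<noteq> [] \<Longrightarrow> hd p \<in> S \<Longrightarrow> set p \<subseteq> S"
  by (induction p rule: induct_list012) auto

lemma succ_reach: "successively (\<lambda>x y. (x,y)\<in> R) p \<Longrightarrow> x \<in> set p \<Longrightarrow> (x, last p) \<in> R\<^sup>*"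
proof (induction p arbitrary: x rule: induct_list012)
  case (3 a b zs)
  then have "(b, last (b#zs)) \<in> R\<^sup>*" by auto
  with 3 show ?case by (auto intro: converse_rtrancl_into_rtrancl)
qed auto

lemma succ_reach_back: "successively (\<lambda>x y. (x,y)\<in> R) p \<Longrightarrow> sym R \<Longrightarrow> x \<in> set p \<Longrightarrow> (last p, x) \<in> R\<^sup>*"
proof (induction p arbitrary: x rule: induct_list012)
  case (3 a b zs)
  then have "(last (b#zs), b) \<in> R\<^sup>*" by auto
  have "(b,a) \<in> R" if "x = a" using 3 that by (auto dest: symD)
  have l: "last (a#b#zs) = last (b#zs)" by simp
  show ?case
  proof (cases "x = a")
    case True
    then show ?thesis using l \<open>(last (b#zs), b) \<in> R\<^sup>*\<close> \<open>x = a \<Longrightarrow> (b,a) \<in> R\<close>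
      by (simp add: rtrancl_into_rtrancl)
  next
    case False
    then have "x \<in> set (b#zs)" using 3 by auto
    have "successively (\<lambda>x y. (x,y)\<in> R) (b#zs)" using 3(3) by simp
    then have "(last (b#zs), x) \<in> R\<^sup>*" using 3(2)[of x] \<open>x \<in> set (b#zs)\<close> 3(4) by blast
    then show ?thesis using l by simp
  qed
qed auto

lemma succ_mono: "successively P p \<Longrightarrow> (\<And>x y. x \<in> set p \<Longrightarrow> y \<in> set p \<Longrightarrow> x \<noteq> y \<Longrightarrow> P x y \<Longrightarrow> Q x y) \<Longrightarrow> distinct p \<Longrightarrow> successively Q p"
  by (induction p rule: induct_list012) auto



definition Adj :: "('a \<times> 'a) set \<Rightarrow> 'a \<Rightarrow> 'a \<Rightarrow> bool" where
  "Adj A x y \<longleftrightarrow> (x,y) \<in> A \<or> (y,x) \<in> A"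

lemma sym_und: "sym (und_adj A S)"
  by (auto simp: sym_def und_adj_def)

lemma path_conn:
  assumes "successively (Adj A) p" "distinct p" "set p = T"
  shows "und_connected A T"
proof (cases "p = []")
  case True then show ?thesis using assms by (simp add: und_connected_def)
next
  case False
  have s: "successively (\<lambda>x y. (x,y) \<in> und_adj A T) p"
    by (rule succ_mono[OF assms(1) _ assms(2)]) (use assms(3) in \<open>auto simp: und_adj_def Adj_def\<close>)
  show ?thesis unfolding und_connected_def
  proof (intro ballI)
    fix u v assume "u \<in> T" "v \<in> T"
    then have "(u, last p) \<in> (und_adj A T)\<^sup>*" "(last p, v) \<in> (und_adj A T)\<^sup>*"
      using succ_reach[OF s] succ_reach_back[OF s sym_und] assms(3) by auto
    then show "(u,v) \<in> (und_adj A T)\<^sup>*" by (rule rtrancl_trans)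
  qed
qed

lemma cycle_bicon:
  assumes "distinct c" "3 \<le> length c" "successively (Adj A) c" "Adj A (last c) (hd c)"
  shows "biconnected A (set c)"
  unfolding biconnected_def
proof (intro conjI ballI)
  show "finite (set c)" by simp
  show "3 \<le> card (set c)" using assms by (simp add: distinct_card)
  show "und_connected A (set c)" using assms by (intro path_conn[of A c]) auto
  fix v assume "v \<in> set c"
  then obtain xs ys where c: "c = xs @ v # ys" by (meson split_list)
  have s1: "successively (Adj A) xs" "successively (Adj A) ys"
    using assms(3) unfolding c by (auto simp: successively_append_iff successively_Cons)
  have j: "Adj A (last ys) (hd xs)" if "xs \<noteq> []" "ys \<noteq> []"
    using assms(4) that unfolding c by simp
  have "successively (Adj A) (ys @ xs)"
    using s1 j by (auto simp: successively_append_iff)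
  moreover have "distinct (ys @ xs)" using assms(1) unfolding c by auto
  moreover have "set (ys @ xs) = set c - {v}" using assms(1) unfolding c by auto
  ultimately show "und_connected A (set c - {v})" by (rule path_conn)
qed



lemma Adj_sym: "(\<lambda>x y. Adj A y x) = Adj A"
  by (auto simp: Adj_def fun_eq_iff)

lemma root_lemma:
  assumes "{a,b,k} \<subseteq> X" "(k,a) \<in> A" "Adj A a b"
    and "\<forall>x\<in>X. (x,k) \<in> (A\<inter>X\<times>X)\<^sup>* \<or> (x,b) \<in> (A\<inter>X\<times>X)\<^sup>* \<or> x = a"
  shows "\<forall>x\<in>X. reach_in A X x (if (b,a) \<in> A then a else b)"
proof
  fix x assume x: "x \<in> X"
  let ?E = "A\<inter>X\<times>X"
  have ka: "(k,a) \<in> ?E" using assms by auto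
  show "reach_in A X x (if (b,a) \<in> A then a else b)"
  proof (cases "(b,a) \<in> A")
    case True
    then have ba: "(b,a) \<in> ?E" using assms by auto
    have "(x,k) \<in> ?E\<^sup>* \<or> (x,b) \<in> ?E\<^sup>* \<or> x = a" using assms(4) x by blast
    then have "(x,a) \<in> ?E\<^sup>*"
    proof (elim disjE)
      assume "(x,k) \<in> ?E\<^sup>*" then show ?thesis using ka by (rule rtrancl_into_rtrancl)
    next
      assume "(x,b) \<in> ?E\<^sup>*" then show ?thesis using ba by (rule rtrancl_into_rtrancl)
    qed simp
    then show ?thesis using True x assms(1) by (simp add: reach_in_def)
  next
    case False
    then have ab: "(a,b) \<in> ?E" using assms by (auto simp: Adj_def)
    have "(k,b) \<in> ?E\<^sup>*" using ka ab by (meson r_into_rtrancl rtrancl_into_rtrancl)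
    have "(x,k) \<in> ?E\<^sup>* \<or> (x,b) \<in> ?E\<^sup>* \<or> x = a" using assms(4) x by blast
    then have "(x,b) \<in> ?E\<^sup>*"
    proof (elim disjE)
      assume "(x,k) \<in> ?E\<^sup>*" then show ?thesis using \<open>(k,b) \<in> ?E\<^sup>*\<close> by (rule rtrancl_trans)
    next
      assume "x = a" then show ?thesis using ab by (simp add: r_into_rtrancl)
    qed
    then show ?thesis using False x assms(1) by (simp add: reach_in_def)
  qed
qed

lemma construct:
  assumes "a \<notin> S" "k \<in> S" "b \<in> S" "k \<noteq> b" "(k,a) \<in> A" "Adj A a b" "u \<in> S"
    "(u,k) \<in> (A \<inter> S\<times>S)\<^sup>*" "(u,b) \<in> (A \<inter> S\<times>S)\<^sup>*"
  shows "\<exists>X. {a,b,k} \<subseteq> X \<and> X \<subseteq> insert a S \<and> biconnected A X \<and>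
     (\<forall>x\<in>X. (x,k) \<in> (A\<inter>X\<times>X)\<^sup>* \<or> (x,b) \<in> (A\<inter>X\<times>X)\<^sup>* \<or> x = a)"
proof -
  let ?R = "A \<inter> S\<times>S"
  obtain P1 where P1: "P1 \<noteq> []" "hd P1 = u" "last P1 = k" "successively (\<lambda>x y. (x,y)\<in>?R) P1" "distinct P1"
    using dpath[OF assms(8)] by blast
  obtain P2 where P2: "P2 \<noteq> []" "hd P2 = u" "last P2 = b" "successively (\<lambda>x y. (x,y)\<in>?R) P2" "distinct P2"
    using dpath[OF assms(9)] by blast
  have S1: "set P1 \<subseteq> S" using succ_set[OF P1(4) P1(1)] P1(2) assms(7) by auto
  have S2: "set P2 \<subseteq> S" using succ_set[OF P2(4) P2(1)] P2(2) assms(7) by auto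
  have "\<exists>x\<in>set P1. x \<in> set P2" using hd_in_set[OF P1(1)] hd_in_set[OF P2(1)] P1(2) P2(2) by auto
  then obtain xs w ys where sp: "P1 = xs @ w # ys" "w \<in> set P2" "\<forall>y\<in>set ys. y \<notin> set P2"
    by (rule split_list_last_propE)
  obtain zs ts where sp2: "P2 = zs @ w # ts" using sp(2) by (meson split_list)
  have Q1: "last (w#ys) = k" "successively (\<lambda>x y. (x,y)\<in>?R) (w#ys)" "distinct (w#ys)"
    using P1 unfolding sp(1) by (auto simp: successively_append_iff)
  have Q2: "last (w#ts) = b" "successively (\<lambda>x y. (x,y)\<in>?R) (w#ts)" "distinct (w#ts)"
    using P2 unfolding sp2 by (auto simp: successively_append_iff)
  define c where "c = (w#ys) @ a # rev ts"
  have setc: "set c = set (w#ys) \<union> {a} \<union> set ts" by (auto simp: c_def)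
  have aS: "a \<notin> set P1" "a \<notin> set P2" using S1 S2 assms(1) by auto
  have dc: "distinct c"
  proof -
    have "a \<notin> set (w#ys)" "a \<notin> set ts" using aS unfolding sp sp2 by auto
    moreover have "set (w#ys) \<inter> set ts = {}" using sp(3) Q2(3) unfolding sp2 by auto
    ultimately show ?thesis using Q1(3) Q2(3) unfolding c_def by auto
  qed
  have RA: "successively (Adj A) l" if "successively (\<lambda>x y. (x,y)\<in>?R) l" for l
    using that by (rule successively_mono) (auto simp: Adj_def)
  have s1: "successively (Adj A) (w#ys)" using RA[OF Q1(2)] .
  have s2: "successively (Adj A) ts" using RA[OF Q2(2)] by (auto simp: successively_Cons)
  have s3: "successively (Adj A) (a # rev ts)"
  proof -
    have "successively (Adj A) (ts @ [a])"
      using s2 Q2(1) assms(6) by (cases "ts = []") (auto simp: successively_append_iff Adj_def)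
    then have "successively (\<lambda>x y. Adj A y x) (ts @ [a])" by (subst Adj_sym)
    then have "successively (Adj A) (rev (ts @ [a]))" by (simp only: successively_rev)
    then show ?thesis by simp
  qed
  have sc: "successively (Adj A) c"
    unfolding c_def using s1 s3 Q1(1) assms(5)
    by (subst successively_append_iff) (auto simp: Adj_def simp del: last.simps successively.simps)
  have close: "Adj A (last c) (hd c)"
  proof (cases "ts = []")
    case True
    then show ?thesis using Q2(1) assms(6) by (auto simp: c_def Adj_def)
  next
    case False
    then have "(w, hd ts) \<in> A" using Q2(2) by (cases ts) auto
    then show ?thesis using False by (auto simp: c_def Adj_def last_rev)
  qed
  have "k \<in> set (w#ys)" using Q1(1) last_in_set[of "w#ys"] by simp
  then have kc: "k \<in> set c" using setc by blast
  have "b \<in> set (w#ts)" using Q2(1) last_in_set[of "w#ts"] by simp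
  then have bc: "b \<in> set c" using setc by auto
  have abk: "{a,b,k} \<subseteq> set c" using kc bc by (auto simp: c_def)
  have "a \<noteq> b" "a \<noteq> k" using assms(1,2,3) by auto
  then have "card {a,b,k} = 3" using assms(4) by auto
  then have "3 \<le> card (set c)" using card_mono[OF finite_set abk] by simp
  then have lc: "3 \<le> length c" using dc by (simp add: distinct_card)
  have bic: "biconnected A (set c)" using cycle_bicon[OF dc lc sc close] .
  have sub: "set c \<subseteq> insert a S" using setc S1 S2 unfolding sp sp2 by auto
  let ?E = "A \<inter> set c \<times> set c"
  have RE: "successively (\<lambda>x y. (x,y)\<in>?E) l" if "successively (\<lambda>x y. (x,y)\<in>?R) l" "set l \<subseteq> set c" for l
    using that(1) by (rule successively_mono) (use that(2) in auto)
  have "\<forall>x\<in>set c. (x,k) \<in> ?E\<^sup>* \<or> (x,b) \<in> ?E\<^sup>* \<or> x = a"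
  proof
    fix x assume "x \<in> set c"
    then consider "x \<in> set (w#ys)" | "x = a" | "x \<in> set (w#ts)" using setc by auto
    then show "(x,k) \<in> ?E\<^sup>* \<or> (x,b) \<in> ?E\<^sup>* \<or> x = a"
    proof cases
      case 1
      have "(x, last (w#ys)) \<in> ?E\<^sup>*" by (rule succ_reach[OF RE[OF Q1(2)] 1]) (use setc in auto)
      then show ?thesis using Q1(1) by simp
    next
      case 3
      have "(x, last (w#ts)) \<in> ?E\<^sup>*" by (rule succ_reach[OF RE[OF Q2(2)] 3]) (use setc in auto)
      then show ?thesis using Q2(1) by simp
    qed simp
  qed
  then show ?thesis using abk sub bic by blast
qed



lemma gen_step_card: "gen_step V A Y Z \<Longrightarrow> finite Y \<Longrightarrow> finite Z \<and> card Z = Suc (card Y)"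
  by (auto simp: gen_step_def)

lemma gen_star_card: "(gen_step V A)\<^sup>*\<^sup>* Y Z \<Longrightarrow> finite Y \<Longrightarrow> finite Z \<and> card Y \<le> card Z \<and> (Y \<noteq> Z \<longrightarrow> card Y < card Z)"
proof (induction rule: rtranclp_induct)
  case (step Z Z')
  then show ?case using gen_step_card[OF step(2)] by auto
qed simp

theorem mainTheorem6:
  fixes V :: "'a set" and A :: "('a \<times> 'a) set" and W :: "'a set"
  assumes "finite V" and "A \<subseteq> V \<times> V"
    and "W \<subseteq> V" and "card W = 3"
    and "\<exists>P. connected_pair V A P \<and> generated_from V A P W"
  shows "\<exists>X. W \<subseteq> X \<and> X \<subseteq> V \<and> directed_sub_block A X \<and>
           (\<exists>i\<in>W. (\<forall>v\<in>W. reach_in A W v i) \<and> (\<forall>v\<in>X. reach_in A X v i))"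
proof -
  obtain P where cp: "connected_pair V A P" and gf: "generated_from V A P W" using assms(5) by blast
  from gf have fP: "finite P" and cP: "card P < card W" and st: "(gen_step V A)\<^sup>*\<^sup>* P W"
    and c2: "2 \<le> card P"
    by (auto simp: generated_from_def)
  obtain i j where ij: "i \<in> V" "j \<in> V" "i \<noteq> j" "P = {i,j}" "(i,j) \<in> A \<or> (j,i) \<in> A"
    using cp by (auto simp: connected_pair_def)
  have gs: "gen_step V A P W"
  proof -
    from st show ?thesis
    proof (cases rule: converse_rtranclpE)
      case base then show ?thesis using cP by simp
    next
      case (step Y)
      have "finite Y \<and> card Y = Suc (card P)" using gen_step_card[OF step(1) fP] .
      moreover have "card P = 2" using ij by simp
      ultimately have "Y = W" using gen_star_card[OF step(2)] assms(4) by auto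
      then show ?thesis using step(1) by simp
    qed
  qed
  then obtain k a where k: "k \<in> V - P" "W = insert k P" and a: "a \<in> P" "(k,a) \<in> A"
    and nd: "\<not> dyn_partitioning V A a k (P - {a})"
    unfolding gen_step_def by blast
  define b where "b = (if a = i then j else i)"
  have ab: "a \<noteq> b" "b \<in> V" "P - {a} = {b}" "Adj A a b" "P = {a,b}"
    using ij a by (auto simp: b_def Adj_def)
  let ?S = "V - {a}"
  obtain u where u: "u \<in> ?S" "reach_in A ?S u k" "reach_in A ?S u b"
    using nd unfolding dyn_partitioning_def f_E_def IN_set_def ab(3) by blast
  have kb: "k \<noteq> b" "k \<in> ?S" "b \<in> ?S" "a \<notin> ?S" using k ab by auto
  obtain X where X: "{a,b,k} \<subseteq> X" "X \<subseteq> insert a ?S" "biconnected A X"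
    "\<forall>x\<in>X. (x,k) \<in> (A\<inter>X\<times>X)\<^sup>* \<or> (x,b) \<in> (A\<inter>X\<times>X)\<^sup>* \<or> x = a"
    using construct[OF kb(4) kb(2) kb(3) kb(1) a(2) ab(4) u(1)] u(2,3)
    unfolding reach_in_def by blast
  have W: "W = {a,b,k}" using k ab by auto
  define r where "r = (if (b,a) \<in> A then a else b)"
  have rW: "r \<in> W" using W by (simp add: r_def)
  have rX: "\<forall>x\<in>X. reach_in A X x r" unfolding r_def by (rule root_lemma[OF X(1) a(2) ab(4) X(4)])
  have rW2: "\<forall>x\<in>W. reach_in A W x r" unfolding r_def W
    by (rule root_lemma) (use a(2) ab(4) in auto)
  have "directed_sub_block A X" unfolding directed_sub_block_def
    using rX X(1,3) W rW by blast
  moreover have "X \<subseteq> V" using X(2) a(1) ab(5) ij by auto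
  ultimately show ?thesis using X(1) W rW rW2 rX by blast
qed

end
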